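(* For any $d,d'\in D$, the function $f:D'^2\to\mathbb{R}$ given by: for $x,y\in D$, $f(x,y)=0$ if $x=d$ or $y=d'$ and $f(x,y)=1$ otherwise; $f(d,0)=f(0,d')=f(0,0)=0$; $f(a,0)=\tfrac12$ for $a\in D\setminus\{d\}$; $f(0,b)=\tfrac12$ for $b\in D\setminus\{d'\}$ (the basic $k$-submodular relaxation of the soft version of $(x=d\lor y=d')$) is $k$-submodular representable.
   Context: $D=\{1,\dots,k\}$, $D'=\{0\}\cup D$. For a variable set $X$ and $v\in X$ let $X_v=\{v_i:i\in D\}$. An $(X,k)$-network is a directed network with nonnegative capacities $c$ on vertex set $\bigcup_{v\in X}X_v\cup\{s,t\}$; an $s$-$t$ cut $S$ has capacity the total capacity of edges leaving $S$. For $\phi:X\to D'$, $S_\phi=\{s\}\cup\{v_{\phi(v)}:\phi(v)\ne0\}$; the network represents $g$ if $c(S_\phi)=g(\phi)$ for all $\phi$. For an $s$-$t$ cut $S$, $\nu(S)=\{s\}\cup\{v_i:S\cap X_v=\{v_i\}\}$; the network is $k$-submodular if $c(S)\ge c(\nu(S))$ for every $s$-$t$ cut. A function of variables $X$ is $k$-submodular representable if some $k$-submodular $(X,k)$-network represents it. *)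

theory Defs
  imports Complex_Main
begin

datatype 'v node = Src | Snk | Vx 'v nat

definition dom_k :: "nat \<Rightarrow> nat set" where
  "dom_k k = {1..k}"

definition Xv :: "nat \<Rightarrow> 'v \<Rightarrow> 'v node set" where
  "Xv k v = {Vx v i | i. i \<in> dom_k k}"

definition net_vertices :: "'v set \<Rightarrow> nat \<Rightarrow> 'v node set" where
  "net_vertices X k = (\<Union>v\<in>X. Xv k v) \<union> {Src, Snk}"

definition is_network :: "'v set \<Rightarrow> nat \<Rightarrow> ('v node \<Rightarrow> 'v node \<Rightarrow> real) \<Rightarrow> bool" where
  "is_network X k c \<longleftrightarrow> (\<forall>u\<in>net_vertices X k. \<forall>w\<in>net_vertices X k. c u w \<ge> 0)"

definition is_st_cut :: "'v set \<Rightarrow> nat \<Rightarrow> 'v node set \<Rightarrow> bool" where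
  "is_st_cut X k S \<longleftrightarrow> S \<subseteq> net_vertices X k \<and> Src \<in> S \<and> Snk \<notin> S"

definition cut_cap :: "'v set \<Rightarrow> nat \<Rightarrow> ('v node \<Rightarrow> 'v node \<Rightarrow> real) \<Rightarrow> 'v node set \<Rightarrow> real" where
  "cut_cap X k c S = (\<Sum>u\<in>S. \<Sum>w\<in>net_vertices X k - S. c u w)"

definition S_phi :: "'v set \<Rightarrow> ('v \<Rightarrow> nat) \<Rightarrow> 'v node set" where
  "S_phi X \<phi> = {Src} \<union> {Vx v (\<phi> v) | v. v \<in> X \<and> \<phi> v \<noteq> 0}"

definition nu :: "'v set \<Rightarrow> nat \<Rightarrow> 'v node set \<Rightarrow> 'v node set" where
  "nu X k S = {Src} \<union> {Vx v i | v i. v \<in> X \<and> i \<in> dom_k k \<and> S \<inter> Xv k v = {Vx v i}}"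

definition assignments :: "'v set \<Rightarrow> nat \<Rightarrow> ('v \<Rightarrow> nat) set" where
  "assignments X k = {\<phi>. \<forall>v\<in>X. \<phi> v \<in> {0..k}}"

definition represents :: "'v set \<Rightarrow> nat \<Rightarrow> ('v node \<Rightarrow> 'v node \<Rightarrow> real) \<Rightarrow> (('v \<Rightarrow> nat) \<Rightarrow> real) \<Rightarrow> bool" where
  "represents X k c g \<longleftrightarrow> (\<forall>\<phi>\<in>assignments X k. cut_cap X k c (S_phi X \<phi>) = g \<phi>)"

definition k_submodular_network :: "'v set \<Rightarrow> nat \<Rightarrow> ('v node \<Rightarrow> 'v node \<Rightarrow> real) \<Rightarrow> bool" where
  "k_submodular_network X k c \<longleftrightarrow>
     (\<forall>S. is_st_cut X k S \<longrightarrow> cut_cap X k c S \<ge> cut_cap X k c (nu X k S))"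

definition k_submodular_representable :: "'v set \<Rightarrow> nat \<Rightarrow> (('v \<Rightarrow> nat) \<Rightarrow> real) \<Rightarrow> bool" where
  "k_submodular_representable X k g \<longleftrightarrow>
     (\<exists>c. is_network X k c \<and> k_submodular_network X k c \<and> represents X k c g)"

definition f22 :: "nat \<Rightarrow> nat \<Rightarrow> nat \<Rightarrow> nat \<Rightarrow> real" where
  "f22 d d' x y =
     (if x \<noteq> 0 \<and> y \<noteq> 0 then (if x = d \<or> y = d' then 0 else 1)
      else if x = 0 \<and> y = 0 then 0
      else if y = 0 then (if x = d then 0 else 1/2)
      else (if y = d' then 0 else 1/2))"

end

theory Submission
  imports Defs
begin

definition cc :: "nat \<Rightarrow> nat \<Rightarrow> nat \<Rightarrow> bool node \<Rightarrow> bool node \<Rightarrow> real" where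
"cc k d d' u w = (\<Sum>a\<in>{1..k}-{d}. if u = Vx True a \<and> w = Vx False d' then 1/2 else 0)
   + (\<Sum>b\<in>{1..k}-{d'}. if u = Vx False b \<and> w = Vx True d then 1/2 else 0)"

lemma dd: "finite S \<Longrightarrow> finite T \<Longrightarrow>
  (\<Sum>u\<in>S. \<Sum>w\<in>T. if u = p \<and> w = q then x else 0) = (if p\<in>S \<and> q\<in>T then x else (0::real))"
proof -
  assume f: "finite S" "finite T"
  have "(\<Sum>u\<in>S. \<Sum>w\<in>T. if u = p \<and> w = q then x else 0) =
        (\<Sum>u\<in>S. if u = p then (\<Sum>w\<in>T. if w = q then x else 0) else 0)"
    by (rule sum.cong) auto
  also have "\<dots> = (if p\<in>S \<and> q\<in>T then x else 0)"
    using f by (simp add: sum.delta')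
  finally show ?thesis .
qed

lemma Xv_eq: "Xv k v = Vx v ` {1..k}"
  by (auto simp: Xv_def dom_k_def)

lemma fin_V: "finite (net_vertices (UNIV::bool set) k)"
  by (simp add: net_vertices_def Xv_eq)

lemma Vx_in_V: "i \<in> {1..k} \<Longrightarrow> Vx v i \<in> net_vertices X k \<longleftrightarrow> v \<in> X"
  by (auto simp: net_vertices_def Xv_def dom_k_def)

lemma swap3: "(\<Sum>u\<in>S. \<Sum>w\<in>T. \<Sum>a\<in>A. f a u w) = (\<Sum>a\<in>A. \<Sum>u\<in>S. \<Sum>w\<in>T. (f a u w::real))"
proof -
  have "(\<Sum>u\<in>S. \<Sum>w\<in>T. \<Sum>a\<in>A. f a u w) = (\<Sum>u\<in>S. \<Sum>a\<in>A. \<Sum>w\<in>T. f a u w)"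
    by (rule sum.cong[OF refl], rule sum.swap)
  also have "\<dots> = (\<Sum>a\<in>A. \<Sum>u\<in>S. \<Sum>w\<in>T. f a u w)" by (rule sum.swap)
  finally show ?thesis .
qed

lemma cutf:
  assumes S: "S \<subseteq> net_vertices (UNIV::bool set) k" and d: "d \<in> {1..k}" "d' \<in> {1..k}"
  shows "cut_cap UNIV k (cc k d d') S =
     1/2*(\<Sum>a\<in>{1..k}-{d}. of_bool(Vx True a \<in> S \<and> Vx False d' \<notin> S))
   + 1/2*(\<Sum>b\<in>{1..k}-{d'}. of_bool(Vx False b \<in> S \<and> Vx True d \<notin> S))"
proof -
  let ?V = "net_vertices (UNIV::bool set) k"
  have fS: "finite S" using S fin_V finite_subset by blast
  have fT: "finite (?V - S)" using fin_V by blast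
  have e1: "\<And>a. (\<Sum>u\<in>S. \<Sum>w\<in>?V-S. if u = Vx True a \<and> w = Vx False d' then (1/2::real) else 0)
       = 1/2 * of_bool(Vx True a \<in> S \<and> Vx False d' \<notin> S)"
    using dd[OF fS fT] d S by (auto simp: Vx_in_V)
  have e2: "\<And>b. (\<Sum>u\<in>S. \<Sum>w\<in>?V-S. if u = Vx False b \<and> w = Vx True d then (1/2::real) else 0)
       = 1/2 * of_bool(Vx False b \<in> S \<and> Vx True d \<notin> S)"
    using dd[OF fS fT] d S by (auto simp: Vx_in_V)
  have "cut_cap UNIV k (cc k d d') S =
     (\<Sum>u\<in>S. \<Sum>w\<in>?V-S. (\<Sum>a\<in>{1..k}-{d}. if u = Vx True a \<and> w = Vx False d' then 1/2 else 0))
   + (\<Sum>u\<in>S. \<Sum>w\<in>?V-S. (\<Sum>b\<in>{1..k}-{d'}. if u = Vx False b \<and> w = Vx True d then 1/2 else 0))"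
    by (simp add: cut_cap_def cc_def sum.distrib)
  also have "\<dots> = (\<Sum>a\<in>{1..k}-{d}. \<Sum>u\<in>S. \<Sum>w\<in>?V-S. if u = Vx True a \<and> w = Vx False d' then 1/2 else 0)
   + (\<Sum>b\<in>{1..k}-{d'}. \<Sum>u\<in>S. \<Sum>w\<in>?V-S. if u = Vx False b \<and> w = Vx True d then 1/2 else 0)"
    by (rule arg_cong2[where f="(+)"]; rule swap3)
  also have "\<dots> = (\<Sum>a\<in>{1..k}-{d}. 1/2 * of_bool(Vx True a \<in> S \<and> Vx False d' \<notin> S))
   + (\<Sum>b\<in>{1..k}-{d'}. 1/2 * of_bool(Vx False b \<in> S \<and> Vx True d \<notin> S))"
    by (simp only: e1 e2)
  finally show ?thesis by (simp only: sum_distrib_left)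
qed


lemma Sphi_mem: "Vx v i \<in> S_phi UNIV \<phi> \<longleftrightarrow> \<phi> v = i \<and> i \<noteq> 0"
  by (auto simp: S_phi_def)

lemma Sphi_sub: "\<phi> \<in> assignments UNIV k \<Longrightarrow> S_phi (UNIV::bool set) \<phi> \<subseteq> net_vertices UNIV k"
  by (auto simp: S_phi_def assignments_def net_vertices_def Xv_def dom_k_def)

lemma sdelta: "finite A \<Longrightarrow> (\<Sum>a\<in>A. of_bool(p = a \<and> Q a)::real) = of_bool(p\<in>A \<and> Q p)"
proof -
  assume f: "finite A"
  have "(\<Sum>a\<in>A. of_bool(p = a \<and> Q a)::real) = (\<Sum>a\<in>A. if a = p then of_bool (Q p) else 0)"
    by (rule sum.cong) auto
  also have "\<dots> = of_bool(p\<in>A \<and> Q p)" using f by (simp add: sum.delta')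
  finally show ?thesis .
qed

lemma rep:
  assumes phi: "\<phi> \<in> assignments UNIV k" and d: "d \<in> {1..k}" "d' \<in> {1..k}"
  shows "cut_cap UNIV k (cc k d d') (S_phi UNIV \<phi>) = f22 d d' (\<phi> True) (\<phi> False)"
proof -
  have A: "(\<Sum>a\<in>{1..k}-{d}. of_bool(Vx True a \<in> S_phi UNIV \<phi> \<and> Vx False d' \<notin> S_phi UNIV \<phi>)::real)
     = of_bool(\<phi> True \<in> {1..k}-{d} \<and> \<phi> False \<noteq> d')"
  proof -
    have "(\<Sum>a\<in>{1..k}-{d}. of_bool(Vx True a \<in> S_phi UNIV \<phi> \<and> Vx False d' \<notin> S_phi UNIV \<phi>)::real)
      = (\<Sum>a\<in>{1..k}-{d}. of_bool(\<phi> True = a \<and> \<phi> False \<noteq> d'))"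
      by (rule sum.cong) (use d in \<open>auto simp: Sphi_mem\<close>)
    also have "\<dots> = of_bool(\<phi> True \<in> {1..k}-{d} \<and> \<phi> False \<noteq> d')" by (rule sdelta) simp
    finally show ?thesis .
  qed
  have B: "(\<Sum>b\<in>{1..k}-{d'}. of_bool(Vx False b \<in> S_phi UNIV \<phi> \<and> Vx True d \<notin> S_phi UNIV \<phi>)::real)
     = of_bool(\<phi> False \<in> {1..k}-{d'} \<and> \<phi> True \<noteq> d)"
  proof -
    have "(\<Sum>b\<in>{1..k}-{d'}. of_bool(Vx False b \<in> S_phi UNIV \<phi> \<and> Vx True d \<notin> S_phi UNIV \<phi>)::real)
      = (\<Sum>b\<in>{1..k}-{d'}. of_bool(\<phi> False = b \<and> \<phi> True \<noteq> d))"
      by (rule sum.cong) (use d in \<open>auto simp: Sphi_mem\<close>)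
    also have "\<dots> = of_bool(\<phi> False \<in> {1..k}-{d'} \<and> \<phi> True \<noteq> d)" by (rule sdelta) simp
    finally show ?thesis .
  qed
  have r: "\<phi> True \<le> k" "\<phi> False \<le> k" using phi by (auto simp: assignments_def)
  show ?thesis
    unfolding cutf[OF Sphi_sub[OF phi] d] A B using r d
    by (auto simp: f22_def)
qed

definition psi :: "nat \<Rightarrow> bool node set \<Rightarrow> bool \<Rightarrow> nat" where
  "psi k S v = (if \<exists>i. S \<inter> Xv k v = {Vx v i} then THE i. S \<inter> Xv k v = {Vx v i} else 0)"

lemma psi_eq: assumes "S \<inter> Xv k v = {Vx v i}" shows "psi k S v = i"
proof -
  have "(THE i. S \<inter> Xv k v = {Vx v i}) = i"
    by (rule the_equality) (use assms in simp_all)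
  thus ?thesis using assms by (auto simp: psi_def)
qed

lemma psi_nz: assumes "psi k S v \<noteq> 0" shows "S \<inter> Xv k v = {Vx v (psi k S v)}"
proof -
  from assms obtain i where "S \<inter> Xv k v = {Vx v i}" by (auto simp: psi_def split: if_splits)
  thus ?thesis using psi_eq by metis
qed

lemma psi_range: "psi k S v \<in> {0..k}"
proof (cases "psi k S v = 0")
  case False
  then have "Vx v (psi k S v) \<in> Xv k v" using psi_nz by blast
  thus ?thesis by (auto simp: Xv_def dom_k_def)
qed simp

lemma nu_eq: "nu UNIV k S = S_phi UNIV (psi k S)"
proof (rule set_eqI)
  fix z show "z \<in> nu UNIV k S \<longleftrightarrow> z \<in> S_phi UNIV (psi k S)"
  proof (cases z)
    case (Vx v i)
    have "Vx v i \<in> nu UNIV k S \<longleftrightarrow> i \<in> dom_k k \<and> S \<inter> Xv k v = {Vx v i}"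
      by (auto simp: nu_def)
    also have "\<dots> \<longleftrightarrow> psi k S v = i \<and> i \<noteq> 0"
    proof
      assume h: "i \<in> dom_k k \<and> S \<inter> Xv k v = {Vx v i}"
      thus "psi k S v = i \<and> i \<noteq> 0" using psi_eq[of S k v i] by (auto simp: dom_k_def)
    next
      assume h: "psi k S v = i \<and> i \<noteq> 0"
      hence "S \<inter> Xv k v = {Vx v i}" using psi_nz by blast
      moreover hence "Vx v i \<in> Xv k v" by blast
      ultimately show "i \<in> dom_k k \<and> S \<inter> Xv k v = {Vx v i}" by (auto simp: Xv_def)
    qed
    finally show ?thesis using Vx by (simp only: Sphi_mem)
  qed (auto simp: nu_def S_phi_def)
qed

lemma le_sum1:
  assumes "finite A" "a \<in> A" "P a"
  shows "(1::real) \<le> (\<Sum>x\<in>A. of_bool (P x))"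
proof -
  have "of_bool (P a) \<le> (\<Sum>x\<in>A. (of_bool (P x)::real))"
    by (rule member_le_sum) (use assms in auto)
  thus ?thesis using assms by simp
qed

lemma memS: "S \<subseteq> net_vertices UNIV k \<Longrightarrow> Vx v j \<in> S \<Longrightarrow> j \<in> {1..k}"
  by (auto simp: net_vertices_def Xv_def dom_k_def)

lemma psi_mem: assumes "S \<subseteq> net_vertices UNIV k" "psi k S v \<noteq> 0"
  shows "Vx v j \<in> S \<longleftrightarrow> j = psi k S v"
proof
  have e: "S \<inter> Xv k v = {Vx v (psi k S v)}" by (rule psi_nz[OF assms(2)])
  { assume j: "Vx v j \<in> S"
    hence "j \<in> {1..k}" by (rule memS[OF assms(1)])
    hence "Vx v j \<in> Xv k v" by (simp add: Xv_def dom_k_def)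
    hence "Vx v j \<in> S \<inter> Xv k v" using j by blast
    thus "j = psi k S v" unfolding e by simp }
  { assume "j = psi k S v"
    thus "Vx v j \<in> S" using e by blast }
qed

lemma psi_zero: assumes "S \<subseteq> net_vertices UNIV k" "psi k S v = 0" "Vx v j \<in> S"
  shows "\<exists>j'\<in>{1..k}. j' \<noteq> j \<and> Vx v j' \<in> S"
proof (rule ccontr)
  assume "\<not> ?thesis"
  hence "S \<inter> Xv k v = {Vx v j}" using assms memS[OF assms(1)]
    by (auto simp: Xv_def dom_k_def)
  hence "psi k S v = j" by (rule psi_eq)
  thus False using assms memS[OF assms(1) assms(3)] by simp
qed

theorem lemma22:
  fixes k d d' :: nat
  assumes "d \<in> {1..k}" and "d' \<in> {1..k}"
  shows "k_submodular_representable (UNIV :: bool set) k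
           (\<lambda>\<phi>. f22 d d' (\<phi> True) (\<phi> False))"
  unfolding k_submodular_representable_def
proof (intro exI conjI)
  show "is_network UNIV k (cc k d d')"
    unfolding is_network_def cc_def by (intro ballI add_nonneg_nonneg sum_nonneg) simp_all
  show "represents UNIV k (cc k d d') (\<lambda>\<phi>. f22 d d' (\<phi> True) (\<phi> False))"
    using rep assms by (auto simp: represents_def)
  show "k_submodular_network UNIV k (cc k d d')"
    unfolding k_submodular_network_def
  proof (intro allI impI)
    fix S :: "bool node set" assume "is_st_cut UNIV k S"
    hence S: "S \<subseteq> net_vertices UNIV k" by (simp add: is_st_cut_def)
    have pa: "psi k S \<in> assignments UNIV k" using psi_range by (auto simp: assignments_def)
    let ?TA = "(\<Sum>a\<in>{1..k}-{d}. of_bool(Vx True a \<in> S \<and> Vx False d' \<notin> S))::real"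
    let ?TB = "(\<Sum>b\<in>{1..k}-{d'}. of_bool(Vx False b \<in> S \<and> Vx True d \<notin> S))::real"
    have c: "cut_cap UNIV k (cc k d d') S = 1/2 * ?TA + 1/2 * ?TB" by (rule cutf[OF S assms])
    have TA: "?TA \<ge> 0" and TB: "?TB \<ge> 0" by (auto intro: sum_nonneg)
    have nu: "cut_cap UNIV k (cc k d d') (nu UNIV k S) = f22 d d' (psi k S True) (psi k S False)"
      unfolding nu_eq by (rule rep[OF pa assms])
    define a where "a = psi k S True"
    define b where "b = psi k S False"
    have ar: "a \<le> k" "b \<le> k" using psi_range a_def b_def by auto
    have "f22 d d' a b \<le> 1/2 * ?TA + 1/2 * ?TB"
    proof -
      consider "a \<noteq> 0" "b \<noteq> 0" "a \<noteq> d" "b \<noteq> d'" | "a \<noteq> 0" "b = 0" "a \<noteq> d"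
        | "a = 0" "b \<noteq> 0" "b \<noteq> d'" | "f22 d d' a b = 0"
        by (cases "a = 0"; cases "b = 0"; cases "a = d"; cases "b = d'"; simp add: f22_def)
      thus ?thesis
      proof cases
        case 1
        have m1: "\<And>j. Vx True j \<in> S \<longleftrightarrow> j = a" using psi_mem[OF S] 1 a_def by auto
        have m2: "\<And>j. Vx False j \<in> S \<longleftrightarrow> j = b" using psi_mem[OF S] 1 b_def by auto
        have "1 \<le> ?TA" by (rule le_sum1[where a=a]) (use 1 m1 m2 ar in auto)
        moreover have "1 \<le> ?TB" by (rule le_sum1[where a=b]) (use 1 m1 m2 ar in auto)
        ultimately show ?thesis using 1 by (simp add: f22_def)
      next
        case 2
        have m1: "\<And>j. Vx True j \<in> S \<longleftrightarrow> j = a" using psi_mem[OF S] 2 a_def by auto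
        show ?thesis
        proof (cases "Vx False d' \<in> S")
          case False
          have "1 \<le> ?TA" by (rule le_sum1[where a=a]) (use 2 m1 ar False in auto)
          thus ?thesis using 2 TB by (simp add: f22_def)
        next
          case True
          then obtain j where j: "j \<in> {1..k}" "j \<noteq> d'" "Vx False j \<in> S"
            using psi_zero[OF S] 2 b_def by metis
          have "1 \<le> ?TB" by (rule le_sum1[where a=j]) (use 2 m1 j in auto)
          thus ?thesis using 2 TA by (simp add: f22_def)
        qed
      next
        case 3
        have m2: "\<And>j. Vx False j \<in> S \<longleftrightarrow> j = b" using psi_mem[OF S] 3 b_def by auto
        show ?thesis
        proof (cases "Vx True d \<in> S")
          case False
          have "1 \<le> ?TB" by (rule le_sum1[where a=b]) (use 3 m2 ar False in auto)
          thus ?thesis using 3 TA by (simp add: f22_def)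
        next
          case True
          then obtain j where j: "j \<in> {1..k}" "j \<noteq> d" "Vx True j \<in> S"
            using psi_zero[OF S] 3 a_def by metis
          have "1 \<le> ?TA" by (rule le_sum1[where a=j]) (use 3 m2 j in auto)
          thus ?thesis using 3 TB by (simp add: f22_def)
        qed
      next
        case 4
        thus ?thesis using TA TB by simp
      qed
    qed
    thus "cut_cap UNIV k (cc k d d') S \<ge> cut_cap UNIV k (cc k d d') (nu UNIV k S)"
      using c nu a_def b_def by simp
  qed
qed

end
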